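(* Let $n\ge 1$, $p\in\{0,\dots,n\}$, $\mathcal{X}=\{x\in\{0,1\}^n:\sum_{i=1}^n x_i=p\}$ (the minimum selection problem), $\hat c\in\mathbb{R}^n_{\ge0}$, and fix $\lambda\in[0,1]$. Let $\mathcal{U}=\prod_{i=1}^n[(1-\lambda)\hat c_i,(1+\lambda)\hat c_i]$. Then a nominal solution $\hat x$ (a minimizer of $\hat c^tx$ over $\mathcal{X}$) is an optimal solution of the min-max regret selection problem \[ \min_{x\in\mathcal{X}}\ \max_{c\in\mathcal{U}}\Big(c^tx-\min_{y\in\mathcal{X}}c^ty\Big). \] *)

theory Defs
  imports "HOL-Analysis.Analysis"
begin

(* Vectors in R^n / {0,1}^n are represented as functions nat => real, relevant on {..<n}. *)

definition sel_set :: "nat \<Rightarrow> nat \<Rightarrow> (nat \<Rightarrow> real) set" where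
  "sel_set n p = {x. (\<forall>i<n. x i = 0 \<or> x i = 1) \<and> (\<forall>i\<ge>n. x i = 0) \<and> (\<Sum>i<n. x i) = real p}"

definition cost :: "nat \<Rightarrow> (nat \<Rightarrow> real) \<Rightarrow> (nat \<Rightarrow> real) \<Rightarrow> real" where
  "cost n c x = (\<Sum>i<n. c i * x i)"

definition unc_set :: "nat \<Rightarrow> real \<Rightarrow> (nat \<Rightarrow> real) \<Rightarrow> (nat \<Rightarrow> real) set" where
  "unc_set n lam ch = {c. (\<forall>i<n. (1 - lam) * ch i \<le> c i \<and> c i \<le> (1 + lam) * ch i) \<and> (\<forall>i\<ge>n. c i = 0)}"

definition regret :: "nat \<Rightarrow> nat \<Rightarrow> (nat \<Rightarrow> real) \<Rightarrow> (nat \<Rightarrow> real) \<Rightarrow> real" where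
  "regret n p c x = cost n c x - (INF y\<in>sel_set n p. cost n c y)"

definition max_regret :: "nat \<Rightarrow> nat \<Rightarrow> real \<Rightarrow> (nat \<Rightarrow> real) \<Rightarrow> (nat \<Rightarrow> real) \<Rightarrow> real" where
  "max_regret n p lam ch x = (SUP c\<in>unc_set n lam ch. regret n p c x)"

end

theory Submission
  imports Defs
begin

lemma sel_bin: "y \<in> sel_set n p \<Longrightarrow> k < n \<Longrightarrow> y k = 0 \<or> y k = 1"
  by (simp add: sel_set_def)

lemma cost_abs: assumes "y \<in> sel_set n p" shows "\<bar>cost n c y\<bar> \<le> (\<Sum>k<n. \<bar>c k\<bar>)"
proof -
  have "\<bar>cost n c y\<bar> \<le> (\<Sum>k<n. \<bar>c k * y k\<bar>)" unfolding cost_def by (rule sum_abs)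
  also have "\<dots> \<le> (\<Sum>k<n. \<bar>c k\<bar>)"
  proof (rule sum_mono)
    fix k assume "k \<in> {..<n}"
    then have "y k = 0 \<or> y k = 1" using sel_bin[OF assms] by auto
    then show "\<bar>c k * y k\<bar> \<le> \<bar>c k\<bar>" by auto
  qed
  finally show ?thesis .
qed

lemma bdd_cost: "bdd_below (cost n c ` sel_set n p)"
proof (rule bdd_belowI2)
  fix y assume "y \<in> sel_set n p"
  from cost_abs[OF this, of c] show "- (\<Sum>k<n. \<bar>c k\<bar>) \<le> cost n c y" by linarith
qed

lemma INF_ge: assumes "sel_set n p \<noteq> {}"
  shows "(INF y\<in>sel_set n p. cost n c y) \<ge> -(\<Sum>k<n. \<bar>c k\<bar>)"
proof (rule cINF_greatest[OF assms])
  fix y assume "y \<in> sel_set n p"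
  from cost_abs[OF this, of c] show "- (\<Sum>k<n. \<bar>c k\<bar>) \<le> cost n c y" by linarith
qed

lemma card_sel: assumes "y \<in> sel_set n p" shows "card {k. k<n \<and> y k = 1} = p"
proof -
  have "(\<Sum>k<n. y k) = (\<Sum>k<n. if y k = 1 then 1 else 0)"
    by (rule sum.cong) (use sel_bin[OF assms] in auto)
  also have "\<dots> = real (card {k. k<n \<and> y k = 1})"
    by (simp add: sum.If_cases lessThan_def Collect_conj_eq Int_commute)
  finally show ?thesis using assms by (simp add: sel_set_def)
qed

lemma nominal_order:
  assumes xh: "xh \<in> sel_set n p"
    and opt: "\<forall>y\<in>sel_set n p. cost n ch xh \<le> cost n ch y"
    and i: "i < n" "xh i = 0" and j: "j < n" "xh j = 1"
  shows "ch j \<le> ch i"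
proof -
  have ij: "i \<noteq> j" using i j by auto
  define z where "z = xh(i:=1, j:=0)"
  have d: "(\<Sum>k<n. z k) = (\<Sum>k<n. xh k) + (\<Sum>k<n. if k = i then 1 else 0) - (\<Sum>k<n. if k = j then 1 else 0)"
    unfolding sum_subtractf[symmetric] sum.distrib[symmetric]
    by (rule sum.cong) (use i j ij in \<open>auto simp: z_def\<close>)
  have "z \<in> sel_set n p"
    using xh i j ij d by (auto simp: sel_set_def z_def)
  hence "cost n ch xh \<le> cost n ch z" using opt by auto
  moreover have "cost n ch z = cost n ch xh + (\<Sum>k<n. if k = i then ch i else 0) - (\<Sum>k<n. if k = j then ch j else 0)"
    unfolding cost_def sum_subtractf[symmetric] sum.distrib[symmetric]
    by (rule sum.cong) (use i j ij in \<open>auto simp: z_def\<close>)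
  ultimately show ?thesis using i j by simp
qed

theorem theorem3:
  fixes n p :: nat and lam :: real and ch xh :: "nat \<Rightarrow> real"
  assumes "n \<ge> 1" and "p \<le> n"
    and "\<forall>i<n. ch i \<ge> 0"
    and "0 \<le> lam" and "lam \<le> 1"
    and "xh \<in> sel_set n p"
    and "\<forall>y\<in>sel_set n p. cost n ch xh \<le> cost n ch y"
  shows "\<forall>x\<in>sel_set n p. max_regret n p lam ch xh \<le> max_regret n p lam ch x"
proof
  fix x assume x: "x \<in> sel_set n p"
  note xh = assms(6)
  define S1 where "S1 = {k. k<n \<and> x k = 1 \<and> xh k = 0}"
  define S2 where "S2 = {k. k<n \<and> x k = 0 \<and> xh k = 1}"
  define I where "I = {k. k<n \<and> x k = 1 \<and> xh k = 1}"
  have fin: "finite S1" "finite S2" "finite I" unfolding S1_def S2_def I_def by auto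
  have e1: "{k. k<n \<and> x k = 1} = I \<union> S1" "I \<inter> S1 = {}"
    unfolding S1_def I_def using sel_bin[OF xh] by auto
  have e2: "{k. k<n \<and> xh k = 1} = I \<union> S2" "I \<inter> S2 = {}"
    unfolding S2_def I_def using sel_bin[OF x] by auto
  have "card S1 = card S2"
    using card_sel[OF x] card_sel[OF xh] e1 e2 fin by (simp add: card_Un_disjoint)
  then obtain f where f: "bij_betw f S1 S2" using finite_same_card_bij fin by blast
  define \<sigma> where "\<sigma> k = (if k \<in> S1 then f k else if k \<in> S2 then inv_into S1 f k else k)" for k
  have S12: "S1 \<inter> S2 = {}" unfolding S1_def S2_def by auto
  have fS1: "k \<in> S1 \<Longrightarrow> f k \<in> S2" for k using f bij_betwE by blast
  have gS2: "k \<in> S2 \<Longrightarrow> inv_into S1 f k \<in> S1" for k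
    using bij_betw_inv_into[OF f] bij_betwE by blast
  have sig_n: "k < n \<Longrightarrow> \<sigma> k < n" for k
    using fS1 gS2 unfolding \<sigma>_def S1_def S2_def by auto
  have sig_sig: "k < n \<Longrightarrow> \<sigma> (\<sigma> k) = k" for k
  proof -
    assume "k < n"
    show ?thesis
    proof (cases "k \<in> S1")
      case True
      then show ?thesis using fS1[OF True] S12 f
        by (auto simp: \<sigma>_def bij_betw_def)
    next
      case False
      show ?thesis
      proof (cases "k \<in> S2")
        case True
        then show ?thesis using gS2[OF True] False f
          by (auto simp: \<sigma>_def bij_betw_def f_inv_into_f)
      qed (use False in \<open>simp add: \<sigma>_def\<close>)
    qed
  qed
  have bij: "bij_betw \<sigma> {..<n} {..<n}"
    by (rule bij_betw_byWitness[where f'=\<sigma>]) (use sig_n sig_sig in auto)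
  have xh_sig: "k < n \<Longrightarrow> xh (\<sigma> k) = x k" for k
    using fS1 gS2 sel_bin[OF x, of k] sel_bin[OF xh, of k]
    unfolding \<sigma>_def S1_def S2_def by auto
  have ord: "ch (\<sigma> k) \<le> ch k" if "k < n" "x k = 1" for k
  proof (cases "k \<in> S1")
    case True
    then show ?thesis using fS1[OF True] nominal_order[OF xh assms(7), of k "f k"]
      unfolding \<sigma>_def S1_def S2_def by auto
  next
    case False
    then have "k \<notin> S2" using that unfolding S2_def by auto
    then show ?thesis using False by (simp add: \<sigma>_def)
  qed
  have ord2: "ch k \<le> ch (\<sigma> k)" if "k < n" "x k = 0" for k
  proof (cases "k \<in> S2")
    case True
    then have "k \<notin> S1" using S12 by auto
    then show ?thesis using True gS2[OF True] nominal_order[OF xh assms(7), of "inv_into S1 f k" k]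
      unfolding \<sigma>_def S1_def S2_def by auto
  next
    case False
    then have "k \<notin> S1" using that unfolding S1_def by auto
    then show ?thesis using False by (simp add: \<sigma>_def)
  qed
  define c' where "c' k = (if k < n then (if x k = 1 then (1+lam)*ch k else (1-lam)*ch k) else 0)" for k
  have c'U: "c' \<in> unc_set n lam ch"
    unfolding unc_set_def c'_def using assms(3,4,5)
    by (auto simp: mult_right_mono)
  have Xne: "sel_set n p \<noteq> {}" using xh by auto
  have main: "regret n p c xh \<le> regret n p c' x" if cU: "c \<in> unc_set n lam ch" for c
  proof -
    have cb: "k < n \<Longrightarrow> (1 - lam) * ch k \<le> c k \<and> c k \<le> (1 + lam) * ch k" for k
      using cU unfolding unc_set_def by auto
    have step: "cost n c xh - cost n c y \<le> regret n p c' x" if y: "y \<in> sel_set n p" for y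
    proof -
      define y' where "y' k = (if k < n then y (\<sigma> k) else 0)" for k
      have "(\<Sum>k<n. y' k) = (\<Sum>k<n. y (\<sigma> k))" by (simp add: y'_def)
      also have "\<dots> = (\<Sum>k<n. y k)" using sum.reindex_bij_betw[OF bij, of y] .
      finally have "y' \<in> sel_set n p"
        using y sig_n unfolding sel_set_def y'_def by auto
      hence le: "(INF y\<in>sel_set n p. cost n c' y) \<le> cost n c' y'"
        by (rule cINF_lower[OF bdd_cost])
      have "cost n c xh - cost n c y = (\<Sum>m<n. c m * (xh m - y m))"
        unfolding cost_def by (simp add: sum_subtractf right_diff_distrib)
      also have "\<dots> = (\<Sum>k<n. c (\<sigma> k) * (xh (\<sigma> k) - y (\<sigma> k)))"
        using sum.reindex_bij_betw[OF bij, of "\<lambda>m. c m * (xh m - y m)"] by simp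
      also have "\<dots> = (\<Sum>k<n. c (\<sigma> k) * (x k - y' k))"
        by (rule sum.cong) (auto simp: xh_sig y'_def)
      also have "\<dots> \<le> (\<Sum>k<n. c' k * (x k - y' k))"
      proof (rule sum_mono)
        fix k assume k: "k \<in> {..<n}"
        have yb: "y' k = 0 \<or> y' k = 1" using sel_bin[OF y sig_n] k by (auto simp: y'_def)
        have cbs: "(1 - lam) * ch (\<sigma> k) \<le> c (\<sigma> k)" "c (\<sigma> k) \<le> (1 + lam) * ch (\<sigma> k)"
          using cb[OF sig_n] k by auto
        show "c (\<sigma> k) * (x k - y' k) \<le> c' k * (x k - y' k)"
        proof (cases "x k = 1")
          case True
          have "(1 + lam) * ch (\<sigma> k) \<le> (1 + lam) * ch k"
            using ord[of k] True k assms(4) by (auto intro: mult_left_mono)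
          then show ?thesis using True k yb cbs by (auto simp: c'_def)
        next
          case False
          hence x0: "x k = 0" using sel_bin[OF x] k by auto
          have "(1 - lam) * ch k \<le> (1 - lam) * ch (\<sigma> k)"
            using ord2[of k] x0 k assms(5) by (auto intro: mult_left_mono)
          then show ?thesis using x0 k yb cbs by (auto simp: c'_def)
        qed
      qed
      also have "\<dots> = cost n c' x - cost n c' y'"
        unfolding cost_def by (simp add: sum_subtractf right_diff_distrib)
      also have "\<dots> \<le> regret n p c' x" unfolding regret_def using le by simp
      finally show ?thesis .
    qed
    have "cost n c xh - regret n p c' x \<le> (INF y\<in>sel_set n p. cost n c y)"
      by (rule cINF_greatest[OF Xne]) (use step in fastforce)
    thus ?thesis unfolding regret_def by simp
  qed
  have bdd: "bdd_above ((\<lambda>c. regret n p c x) ` unc_set n lam ch)"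
  proof (rule bdd_aboveI2)
    fix c assume cU: "c \<in> unc_set n lam ch"
    have ab: "(\<Sum>k<n. \<bar>c k\<bar>) \<le> (\<Sum>k<n. 2 * ch k)"
    proof (rule sum_mono)
      fix k assume k: "k \<in> {..<n}"
      have "(1 - lam) * ch k \<le> c k" "c k \<le> (1 + lam) * ch k"
        using cU k unfolding unc_set_def by auto
      moreover have "0 \<le> (1 - lam) * ch k" using assms(3,5) k by auto
      moreover have "(1 + lam) * ch k \<le> 2 * ch k" using assms(3,5) k
        by (auto intro: mult_right_mono)
      ultimately show "\<bar>c k\<bar> \<le> 2 * ch k" by auto
    qed
    have "regret n p c x \<le> (\<Sum>k<n. \<bar>c k\<bar>) + (\<Sum>k<n. \<bar>c k\<bar>)"
      unfolding regret_def using cost_abs[OF x, of c] INF_ge[OF Xne, of c] by auto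
    thus "regret n p c x \<le> 2 * (\<Sum>k<n. 2 * ch k)" using ab by linarith
  qed
  show "max_regret n p lam ch xh \<le> max_regret n p lam ch x"
    unfolding max_regret_def
    by (rule cSUP_mono[OF _ bdd]) (use c'U main in auto)
qed

end
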